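(* Let $\alpha\in\mathbb C\setminus[0,\infty)$ with $\mathrm{Re}(\alpha)>0$, and let $s\in\mathbb C$ with $\mathrm{Re}(s)>1$ and $\mathrm{Re}(s)>\mathrm{Re}(\alpha)$. Then $\Phi_\alpha(x)/x^{s+1}$ is Lebesgue integrable on $(1,\infty)$ and $$1-\frac s\alpha=\exp\left[-s(s-1)\int_1^\infty\frac{\Phi_\alpha(x)}{x^{s+1}}\,dx\right].$$
   Context: $\gamma$ is Euler's constant, $\log$ denotes the principal branch on $\mathbb C\setminus(-\infty,0]$, $\mathrm{Ei}_0(z):=\sum_{k\ge1}\frac{z^k}{k\cdot k!}$ (entire), and for $\alpha\in\mathbb C\setminus[0,\infty)$ and $x>1$, $$\varphi_\alpha(x):=\gamma+\log(\log x)+\log(-\alpha)+\mathrm{Ei}_0(\alpha\log x),\qquad \Phi_\alpha(x):=x\int_1^x\frac{\varphi_\alpha(y)}{y^2}\,dy.$$ *)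

theory Defs
  imports "HOL-Analysis.Analysis"
begin

definition Ei0 :: "complex \<Rightarrow> complex" where
  "Ei0 z = (\<Sum>k. z ^ Suc k / (of_nat (Suc k) * fact (Suc k)))"

definition phi :: "complex \<Rightarrow> real \<Rightarrow> complex" where
  "phi \<alpha> x = euler_mascheroni + Ln (complex_of_real (ln x)) + Ln (- \<alpha>)
               + Ei0 (\<alpha> * complex_of_real (ln x))"

definition Phi :: "complex \<Rightarrow> real \<Rightarrow> complex" where
  "Phi \<alpha> x = complex_of_real x * (LBINT y:{1<..x}. phi \<alpha> y / complex_of_real (y ^ 2))"

end

theory Submission
  imports Defs "HOL-Real_Asymp.Real_Asymp"
begin


definition ed :: "complex \<Rightarrow> complex" where
  "ed z = (\<Sum>n. z ^ n / fact (Suc n))"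

definition ec :: "nat \<Rightarrow> complex" where
  "ec n = (if n = 0 then 0 else inverse (of_nat n * fact n))"

lemma exp_real_summable: "summable (\<lambda>n. x ^ n / fact n :: real)"
  using summable_exp[of x] by (simp add: divide_inverse mult.commute)

lemma ec_summable: "summable (\<lambda>n. ec n * z ^ n)"
proof (rule summable_comparison_test'[OF exp_real_summable[of "norm z"]])
  fix n :: nat
  show "norm (ec n * z ^ n) \<le> norm z ^ n / fact n"
  proof (cases "n = 0")
    case False
    have "norm (ec n) = inverse (real n * fact n)"
      using False by (simp add: ec_def norm_mult norm_inverse)
    also have "\<dots> \<le> inverse (fact n)"
      using False by (intro le_imp_inverse_le) (auto simp: fact_ge_1)
    finally have "norm (ec n) \<le> inverse (fact n)" .
    from mult_right_mono[OF this, of "norm z ^ n"] show ?thesis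
      by (simp add: norm_mult norm_power divide_inverse mult.commute)
  qed (simp add: ec_def)
qed

lemma Ei0_ec: "Ei0 z = (\<Sum>n. ec n * z ^ n)"
proof -
  have "(\<Sum>n. ec (Suc n) * z ^ Suc n) = (\<Sum>n. ec n * z ^ n) - ec 0 * z ^ 0"
    by (rule suminf_split_head[OF ec_summable])
  moreover have "(\<lambda>n. ec (Suc n) * z ^ Suc n) = (\<lambda>n. z ^ Suc n / (of_nat (Suc n) * fact (Suc n)))"
    by (simp add: ec_def divide_inverse mult.commute)
  ultimately show ?thesis by (simp add: Ei0_def ec_def)
qed

lemma diffs_ec: "diffs ec = (\<lambda>n. inverse (fact (Suc n)))"
  by (rule ext) (simp add: diffs_def ec_def field_simps del: of_nat_Suc fact_Suc)

lemma ed_alt: "ed z = (\<Sum>n. diffs ec n * z ^ n)"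
  by (simp add: ed_def diffs_ec divide_inverse mult.commute)

lemma Ei0_deriv: "(Ei0 has_field_derivative ed z) (at z)"
proof -
  have "((\<lambda>z. \<Sum>n. ec n * z ^ n) has_field_derivative (\<Sum>n. diffs ec n * z ^ n)) (at z)"
    by (rule termdiffs_strong_converges_everywhere[OF ec_summable])
  then show ?thesis unfolding ed_alt by (simp add: Ei0_ec[abs_def])
qed

lemma Ei0_deriv_chain [derivative_intros]:
  "(f has_field_derivative f') (at x within S) \<Longrightarrow>
   ((\<lambda>x. Ei0 (f x)) has_field_derivative ed (f x) * f') (at x within S)"
  using DERIV_chain2[OF Ei0_deriv] by blast

lemma Ei0_0 [simp]: "Ei0 0 = 0"
  by (simp add: Ei0_def)

lemma ed_summable: "summable (\<lambda>n. z ^ n / fact (Suc n) :: complex)"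
proof (rule summable_comparison_test'[OF exp_real_summable[of "norm z"]])
  fix n :: nat
  have "inverse (fact (Suc n)) \<le> (inverse (fact n) :: real)"
    by (intro le_imp_inverse_le) (auto simp: fact_ge_1)
  from mult_left_mono[OF this, of "norm z ^ n"]
  show "norm (z ^ n / fact (Suc n) :: complex) \<le> norm z ^ n / fact n"
    by (simp add: norm_mult norm_inverse norm_power divide_inverse del: fact_Suc)
qed

lemma ed_mult: "z * ed z = exp z - 1"
proof -
  have s: "(\<lambda>n. z ^ n /\<^sub>R fact n) sums exp z" by (rule exp_converges)
  have "(\<lambda>n. z ^ Suc n /\<^sub>R fact (Suc n)) sums (exp z - z ^ 0 /\<^sub>R fact 0)"
    using sums_Suc_iff[of "\<lambda>n. z ^ n /\<^sub>R fact n"] s by simp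
  moreover have "(\<lambda>n. z ^ Suc n /\<^sub>R fact (Suc n)) = (\<lambda>n. z * (z ^ n / fact (Suc n)))"
    by (simp add: scaleR_conv_of_real divide_inverse mult_ac)
  moreover have "(\<lambda>n. z * (z ^ n / fact (Suc n))) sums (z * ed z)"
    unfolding ed_def by (intro sums_mult summable_sums ed_summable)
  ultimately show ?thesis using sums_unique2 by fastforce
qed

lemma ed_0 [simp]: "ed 0 = 1"
proof -
  have "ed 0 = (\<Sum>n. diffs ec n * 0 ^ n)" by (rule ed_alt)
  also have "\<dots> = diffs ec 0" by (rule powser_zero)
  finally show ?thesis by (simp add: diffs_ec)
qed

lemma exp_real_sums: "(\<lambda>n. x ^ n / fact n) sums exp (x::real)"
  using exp_converges[of x] by (simp add: divide_inverse mult.commute scaleR_conv_of_real)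

lemma norm_ed: "norm (ed z) \<le> exp (norm z)"
proof -
  have "norm (ed z) \<le> (\<Sum>n. norm z ^ n / fact n)"
    unfolding ed_def
  proof (rule norm_suminf_le[OF _ exp_real_summable])
    fix n :: nat
    have "inverse (fact (Suc n)) \<le> (inverse (fact n) :: real)"
      by (intro le_imp_inverse_le) (auto simp: fact_ge_1)
    from mult_left_mono[OF this, of "norm z ^ n"]
    show "norm (z ^ n / fact (Suc n) :: complex) \<le> norm z ^ n / fact n"
      by (simp add: norm_mult norm_inverse norm_power divide_inverse del: fact_Suc)
  qed
  also have "\<dots> = exp (norm z)" using exp_real_sums sums_unique by metis
  finally show ?thesis .
qed

lemma norm_exp_minus1: fixes z :: complex shows "norm (exp z - 1) \<le> norm z * exp (norm z)"
proof -
  have "norm (exp z - 1) = norm z * norm (ed z)" by (simp flip: ed_mult add: norm_mult)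
  also have "\<dots> \<le> norm z * exp (norm z)" by (intro mult_left_mono norm_ed) auto
  finally show ?thesis .
qed

lemma Ei0_growth:
  assumes c: "c > 0" "Re z \<le> c"
  shows "\<exists>M\<ge>0. \<forall>t\<ge>0. norm (Ei0 (z * of_real t)) \<le> M * exp (c * t)"
proof -
  define M0 where "M0 = max (norm z * exp (norm z)) 2"
  have M0: "M0 \<ge> 0" by (simp add: M0_def)
  have bnd: "norm (ed (z * of_real u) * z) \<le> M0 * exp (c * u)" if u: "u \<ge> 0" for u
  proof (cases "u \<le> 1")
    case True
    have "norm (ed (z * of_real u) * z) \<le> exp (norm (z * of_real u)) * norm z"
      using mult_right_mono[OF norm_ed[of "z * of_real u"], of "norm z"] by (simp add: norm_mult)
    also have "\<dots> \<le> exp (norm z) * norm z"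
      using True u by (intro mult_right_mono) (auto simp: norm_mult intro!: mult_left_le)
    also have "\<dots> \<le> M0 * 1" by (simp add: M0_def mult.commute)
    also have "\<dots> \<le> M0 * exp (c * u)" using M0 c u by (intro mult_left_mono) auto
    finally show ?thesis .
  next
    case False
    have "(z * of_real u) * ed (z * of_real u) = exp (z * of_real u) - 1" by (rule ed_mult)
    hence eq: "ed (z * of_real u) * z = (exp (z * of_real u) - 1) / of_real u"
      using False by (auto simp: field_simps)
    have "norm (exp (z * of_real u) - 1) \<le> exp (Re z * u) + 1"
      using norm_triangle_ineq4[of "exp (z * of_real u)" 1] by (simp add: norm_exp_eq_Re)
    also have "\<dots> \<le> 2 * exp (c * u)"
    proof -
      have "exp (Re z * u) \<le> exp (c * u)" using c u by (simp add: mult_right_mono)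
      moreover have "1 \<le> exp (c * u)" using c u by simp
      ultimately show ?thesis by linarith
    qed
    finally have "norm (ed (z * of_real u) * z) \<le> 2 * exp (c * u) / u"
      using False by (simp add: eq norm_divide divide_right_mono)
    also have "\<dots> \<le> 2 * exp (c * u)" using False by (simp add: field_simps)
    also have "\<dots> \<le> M0 * exp (c * u)" by (intro mult_right_mono) (auto simp: M0_def)
    finally show ?thesis .
  qed
  show ?thesis
  proof (intro exI[of _ "M0 / c"] conjI allI impI)
    show "M0 / c \<ge> 0" using M0 c by auto
    fix t :: real assume t: "t \<ge> 0"
    show "norm (Ei0 (z * of_real t)) \<le> M0 / c * exp (c * t)"
    proof (cases "t = 0")
      case False
      hence "0 < t" using t by auto
      have "norm (Ei0 (z * of_real t) - Ei0 (z * of_real 0)) \<le> M0 / c * exp (c * t) - M0 / c * exp (c * 0)"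
      proof (rule differentiable_bound_general[OF \<open>0 < t\<close>])
        show "continuous_on {0..t} (\<lambda>u. Ei0 (z * of_real u))"
          by (intro continuous_on_compose2[OF DERIV_continuous_on[OF Ei0_deriv]] continuous_intros) auto
        show "continuous_on {0..t} (\<lambda>u. M0 / c * exp (c * u))"
          by (intro continuous_intros)
        fix u assume u: "0 < u" "u < t"
        show "((\<lambda>u. Ei0 (z * of_real u)) has_vector_derivative ed (z * of_real u) * z) (at u)"
          by (rule has_vector_derivative_real_field) (auto intro!: derivative_eq_intros)
        show "((\<lambda>u. M0 / c * exp (c * u)) has_vector_derivative M0 * exp (c * u)) (at u)"
          unfolding has_real_derivative_iff_has_vector_derivative[symmetric]
          using c by (auto intro!: derivative_eq_intros)
        show "norm (ed (z * of_real u) * z) \<le> M0 * exp (c * u)" using bnd u by auto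
      qed
      also have "\<dots> \<le> M0 / c * exp (c * t)" using M0 c by simp
      finally show ?thesis by simp
    qed (use M0 c in simp)
  qed
qed


lemma pow_diff_le:
  fixes a b :: real
  assumes "0 \<le> b" "b \<le> a"
  shows "a ^ n - b ^ n \<le> real n * a ^ (n - 1) * (a - b)"
proof (induction n)
  case (Suc n)
  have "a ^ Suc n - b ^ Suc n = a * (a ^ n - b ^ n) + b ^ n * (a - b)" by (simp add: algebra_simps)
  also have "\<dots> \<le> a * (real n * a ^ (n - 1) * (a - b)) + a ^ n * (a - b)"
    using assms Suc by (intro add_mono mult_left_mono mult_right_mono power_mono) auto
  also have "\<dots> = real (Suc n) * a ^ n * (a - b)"
    by (cases n) (simp_all add: algebra_simps)
  finally show ?case by simp
qed simp

lemma exp_neg_quad: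
  assumes "(u::real) \<ge> 0"
  shows "exp (-u) \<le> 1 - u + u^2/2"
proof -
  define k where "k v = 1 - v + v^2/2 - exp (-v)" for v :: real
  have "k 0 \<le> k u"
  proof (rule DERIV_nonneg_imp_nondecreasing[OF assms])
    fix v :: real assume v: "0 \<le> v" "v \<le> u"
    show "\<exists>y. (k has_real_derivative y) (at v) \<and> 0 \<le> y"
      unfolding k_def
      using exp_ge_add_one_self[of "-v"]
      by (intro exI[of _ "-1 + v + exp (-v)"]) (auto intro!: derivative_eq_intros simp: algebra_simps)
  qed
  then show ?thesis by (simp add: k_def)
qed

lemma Ein_harm_bound:
  assumes n: "n \<ge> 2"
  shows "norm (- Ei0 (- of_nat n) - of_real (harm n)) \<le> real n / (2 * (real n - 1)^2)"
proof -
  define m where "m = real n - 1"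
  have m: "m \<ge> 1" using n by (simp add: m_def)
  define S where "S u = (\<Sum>k<n. (1 - (1-u)^(Suc k)) / real (Suc k))" for u :: real
  define F where "F u = - Ei0 (- of_nat n * of_real u) - of_real (S u)" for u :: real
  define \<Phi> where "\<Phi> u = - (real n / 2) * (u / m + 1 / m^2) * exp (- m * u)" for u :: real
  have S1: "S 1 = harm n" by (simp add: S_def harm_altdef divide_inverse)
  have S0: "S 0 = 0" by (simp add: S_def)
  have term_eq: "(real k * x ^ (k - Suc 0) * x + x ^ k) / real (Suc k) = x ^ k" for k and x :: real
  proof (cases k)
    case (Suc j)
    have "x ^ (k - Suc 0) * x = x ^ k" using Suc by simp
    then have "real k * x ^ (k - Suc 0) * x + x ^ k = real (Suc k) * x ^ k"
      by (simp add: algebra_simps)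
    then show ?thesis by (simp del: of_nat_Suc)
  qed simp
  have Sd: "(S has_real_derivative (\<Sum>k<n. (1-u)^k)) (at u)" for u
    unfolding S_def by (auto intro!: derivative_eq_intros simp: term_eq simp del: of_nat_Suc)
  have "norm (F 1 - F 0) \<le> \<Phi> 1 - \<Phi> 0"
  proof (rule differentiable_bound_general[of 0 1])
    show "continuous_on {0..1} F" unfolding F_def S_def
      by (intro continuous_on_compose2[OF DERIV_continuous_on[OF Ei0_deriv]] continuous_intros) auto
    show "continuous_on {0..1} \<Phi>" unfolding \<Phi>_def using m by (intro continuous_intros) auto
    fix u :: real assume u: "0 < u" "u < 1"
    show "(F has_vector_derivative (of_nat n * ed (- of_nat n * of_real u) - of_real (\<Sum>k<n. (1-u)^k))) (at u)"
    proof -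
      have d1: "((\<lambda>u. - Ei0 (- of_nat n * of_real u)) has_vector_derivative (of_nat n * ed (- of_nat n * of_real u))) (at u)"
        by (rule has_vector_derivative_real_field) (auto intro!: derivative_eq_intros)
      have d2: "((\<lambda>u. of_real (S u) :: complex) has_vector_derivative of_real (\<Sum>k<n. (1-u)^k)) (at u)"
        by (rule has_vector_derivative_of_real[OF Sd])
      show ?thesis using has_vector_derivative_diff[OF d1 d2] unfolding F_def by simp
    qed
    show "(\<Phi> has_vector_derivative (real n / 2) * u * exp (- m * u)) (at u)"
      unfolding has_real_derivative_iff_has_vector_derivative[symmetric] \<Phi>_def
      using m by (auto intro!: derivative_eq_intros simp: field_simps power2_eq_square)
    have ed_eq: "of_nat n * ed (- of_nat n * of_real u) = of_real ((1 - exp (- real n * u)) / u)"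
    proof -
      have "(- of_nat n * of_real u) * ed (- of_nat n * of_real u) = exp (- of_nat n * of_real u) - 1"
        by (rule ed_mult)
      also have "exp (- of_nat n * of_real u) = (of_real (exp (- real n * u)) :: complex)"
        by (simp flip: exp_of_real)
      finally show ?thesis using u by (simp add: field_simps)
    qed
    have geo: "(\<Sum>k<n. (1-u)^k) = (1 - (1-u)^n) / u"
      using u by (subst geometric_sum) (auto simp: field_simps)
    define a where "a = exp (-u)"
    define b where "b = 1 - u"
    have ab: "0 \<le> b" "b \<le> a" using u exp_ge_add_one_self[of "-u"] by (auto simp: a_def b_def)
    have an: "a ^ n = exp (- real n * u)" by (simp add: a_def flip: exp_of_nat_mult)
    have an1: "a ^ (n - 1) = exp (- m * u)" using n by (simp add: a_def m_def algebra_simps flip: exp_of_nat_mult)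
    have diff_nonneg: "0 \<le> a ^ n - b ^ n" using ab by (intro diff_ge_0_iff_ge[THEN iffD2] power_mono) auto
    have "a ^ n - b ^ n \<le> real n * a ^ (n - 1) * (a - b)" by (rule pow_diff_le[OF ab])
    also have "\<dots> \<le> real n * a ^ (n - 1) * (u^2/2)"
      using exp_neg_quad[of u] u by (intro mult_left_mono) (auto simp: a_def b_def)
    finally have main: "a ^ n - b ^ n \<le> real n * a ^ (n - 1) * (u^2/2)" .
    have "of_nat n * ed (- of_nat n * of_real u) - of_real (\<Sum>k<n. (1-u)^k) = (of_real (- (a^n - b^n) / u) :: complex)"
    proof -
      have r: "(1 - exp (- real n * u))/u - (1-(1-u)^n)/u = -(a^n - b^n)/u"
        using u by (simp add: an b_def field_simps)
      show ?thesis unfolding ed_eq geo of_real_diff[symmetric] r ..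
    qed
    hence "norm (of_nat n * ed (- of_nat n * of_real u) - of_real (\<Sum>k<n. (1-u)^k)) = abs (- (a^n - b^n) / u)"
      by (simp only: norm_of_real)
    also have "\<dots> = (a^n - b^n) / u" using diff_nonneg u by simp
    also have "\<dots> \<le> real n * a ^ (n - 1) * (u^2/2) / u" using main u by (intro divide_right_mono) auto
    also have "\<dots> = (real n / 2) * u * exp (- m * u)" using u by (simp only: an1) (simp add: power2_eq_square field_simps)
    finally show "norm (of_nat n * ed (- of_nat n * of_real u) - of_real (\<Sum>k<n. (1-u)^k)) \<le> (real n / 2) * u * exp (- m * u)" .
  qed simp
  also have "\<Phi> 1 - \<Phi> 0 \<le> real n / (2 * m^2)"
    using m by (simp add: \<Phi>_def field_simps)
  finally show ?thesis by (simp add: F_def S1 S0 m_def)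
qed


lemma nonpos_Re: "Re z > 0 \<Longrightarrow> z \<notin> \<real>\<^sub>\<le>\<^sub>0"
  by (auto simp: complex_nonpos_Reals_iff)

lemma R_seq: "(\<lambda>n. - euler_mascheroni - of_real (ln (real n)) - Ei0 (- of_nat n) :: complex) \<longlonglongrightarrow> 0"
proof -
  have 1: "(\<lambda>n. of_real (harm n - ln (real n) - euler_mascheroni) :: complex) \<longlonglongrightarrow> 0"
    using tendsto_of_real[where 'a=complex, OF tendsto_diff[OF euler_mascheroni_LIMSEQ tendsto_const[of euler_mascheroni]]]
    by simp
  have 2: "(\<lambda>n. - Ei0 (- of_nat n) - of_real (harm n) :: complex) \<longlonglongrightarrow> 0"
  proof (rule Lim_null_comparison)
    show "eventually (\<lambda>n. norm (- Ei0 (- of_nat n) - of_real (harm n) :: complex) \<le> real n / (2 * (real n - 1)^2)) sequentially"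
      using eventually_ge_at_top[of 2] by eventually_elim (rule Ein_harm_bound)
    show "(\<lambda>n. real n / (2 * (real n - 1)^2)) \<longlonglongrightarrow> 0" by real_asymp
  qed
  have "(\<lambda>n. of_real (harm n - ln (real n) - euler_mascheroni) + (- Ei0 (- of_nat n) - of_real (harm n)) :: complex) \<longlonglongrightarrow> 0"
    using tendsto_add_zero[OF 1 2] .
  moreover have "(\<lambda>n. of_real (harm n - ln (real n) - euler_mascheroni) + (- Ei0 (- of_nat n) - of_real (harm n)) :: complex)
     = (\<lambda>n. - euler_mascheroni - of_real (ln (real n)) - Ei0 (- of_nat n))"
    by (rule ext) (simp only: of_real_diff of_real_euler_mascheroni, algebra)
  ultimately show ?thesis by simp
qed

definition Rf :: "real \<Rightarrow> complex" where
  "Rf t = - euler_mascheroni - Ln (of_real t) - Ei0 (- of_real t)"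

lemma Rf_bound:
  assumes n: "real n \<ge> 1" "real n \<le> t"
  shows "norm (Rf t - Rf (real n)) \<le> exp (- real n) - exp (- t)"
proof (cases "real n = t")
  case False
  hence lt: "real n < t" using n by auto
  have "norm (Rf t - Rf (real n)) \<le> (- exp (- t)) - (- exp (- real n))"
  proof (rule differentiable_bound_general[OF lt])
    have "continuous_on {real n..t} (\<lambda>u. - euler_mascheroni - Ln (of_real u) - Ei0 (- of_real u))"
      using n by (intro continuous_on_compose2[OF DERIV_continuous_on[OF Ei0_deriv]] continuous_intros)
                 (auto simp: complex_nonpos_Reals_iff)
    then show "continuous_on {real n..t} Rf" unfolding Rf_def .
    show "continuous_on {real n..t} (\<lambda>u. - exp (- u))" by (intro continuous_intros)
    fix u assume u: "real n < u" "u < t"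
    have upos: "u > 0" using u n by auto
    show "(Rf has_vector_derivative (- inverse (of_real u) + ed (- of_real u))) (at u)"
      unfolding Rf_def
      by (rule has_vector_derivative_real_field)
         (use upos in \<open>auto intro!: derivative_eq_intros simp: complex_nonpos_Reals_iff\<close>)
    show "((\<lambda>u. - exp (- u)) has_vector_derivative exp (- u)) (at u)"
      unfolding has_real_derivative_iff_has_vector_derivative[symmetric]
      by (auto intro!: derivative_eq_intros)
    have h: "of_real u * ed (- of_real u) = 1 - exp (- of_real u)"
      using ed_mult[of "- of_real u"] by (simp add: algebra_simps)
    have e: "ed (- of_real u) = (1 - exp (- of_real u)) / of_real u"
      using h upos by (simp add: eq_divide_eq mult.commute)
    have "- inverse (of_real u) + ed (- of_real u) = (of_real (- exp (-u) / u) :: complex)"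
      unfolding e using upos by (simp add: field_simps flip: exp_of_real)
    hence "norm (- inverse (of_real u) + ed (- of_real u)) = exp (-u) / u"
      using upos by (simp only: norm_of_real) simp
    also have "\<dots> \<le> exp (-u)" using u n by (simp add: divide_le_eq)
    finally show "norm (- inverse (of_real u) + ed (- of_real u)) \<le> exp (- u)" .
  qed
  then show ?thesis by simp
qed simp

lemma Rf_lim: "(Rf \<longlongrightarrow> 0) at_top"
proof (rule Lim_null_comparison)
  have seq: "(\<lambda>n. Rf (real n)) \<longlonglongrightarrow> 0"
  proof -
    have "eventually (\<lambda>n. Rf (real n) = - euler_mascheroni - of_real (ln (real n)) - Ei0 (- of_nat n)) sequentially"
      using eventually_ge_at_top[of 1] by eventually_elim (simp add: Rf_def Ln_of_real)
    then show ?thesis by (subst tendsto_cong[OF \<open>eventually _ _\<close>]) (rule R_seq)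
  qed
  have fl: "filterlim (\<lambda>t. nat \<lfloor>t\<rfloor>) sequentially (at_top :: real filter)"
    by (rule filterlim_compose[OF filterlim_nat_sequentially filterlim_floor_sequentially])
  have "((\<lambda>t. norm (Rf (real (nat \<lfloor>t\<rfloor>))) + exp (1 - t)) \<longlongrightarrow> 0 + 0) at_top"
    by (intro tendsto_add tendsto_norm_zero filterlim_compose[OF seq fl]) real_asymp
  then show "((\<lambda>t. norm (Rf (real (nat \<lfloor>t\<rfloor>))) + exp (1 - t)) \<longlongrightarrow> 0) at_top" by simp
  show "eventually (\<lambda>t. norm (Rf t) \<le> norm (Rf (real (nat \<lfloor>t\<rfloor>))) + exp (1 - t)) at_top"
    using eventually_ge_at_top[of "1::real"]
  proof eventually_elim
    case (elim t)
    define n where "n = nat \<lfloor>t\<rfloor>"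
    have n1: "real n \<ge> 1" "real n \<le> t" "t < real n + 1" using elim by (auto simp: n_def)
    have "norm (Rf t) \<le> norm (Rf (real n)) + norm (Rf t - Rf (real n))"
      by (metis add.commute norm_triangle_sub)
    also have "norm (Rf t - Rf (real n)) \<le> exp (- real n) - exp (- t)" by (rule Rf_bound[OF n1(1,2)])
    also have "\<dots> \<le> exp (1 - t)"
    proof -
      have "exp (- real n) \<le> exp (1 - t)" using n1 by simp
      moreover have "exp (- t) > 0" by simp
      ultimately show ?thesis by linarith
    qed
    finally show ?case by (simp add: n_def)
  qed
qed


lemma ed_eq: "z \<noteq> 0 \<Longrightarrow> ed z = (exp z - 1) / z"
  using ed_mult[of z] by (simp add: eq_divide_eq mult.commute)

lemma Re_seg:
  assumes "Re w > 0" "0 \<le> \<tau>" "\<tau> \<le> 1"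
  shows "Re (1 + of_real \<tau> * (w - 1)) \<ge> min 1 (Re w)"
proof (cases "Re w \<ge> 1")
  case True
  then show ?thesis using assms by (simp add: mult_nonneg_nonneg)
next
  case False
  have "\<tau> * (1 - Re w) \<le> 1 * (1 - Re w)" using False assms by (intro mult_right_mono) auto
  then show ?thesis using False by (simp add: algebra_simps)
qed

lemma D_bound:
  assumes w: "Re w > 0" and t: "t > 0"
  shows "norm (Ln w + Ei0 (- w * of_real t) - Ei0 (- of_real t)) \<le> norm (w - 1) * exp (- t * min 1 (Re w)) / min 1 (Re w)"
proof -
  define m where "m = min 1 (Re w)"
  have m: "m > 0" using w by (simp add: m_def)
  define z where "z \<tau> = 1 + of_real \<tau> * (w - 1)" for \<tau> :: real
  define K where "K = norm (w - 1) * exp (- t * m) / m"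
  have Rez: "Re (z \<tau>) \<ge> m" if "0 \<le> \<tau>" "\<tau> \<le> 1" for \<tau>
    using Re_seg[OF w that] by (simp add: z_def m_def)
  define f where "f \<tau> = Ln (z \<tau>) + Ei0 (- z \<tau> * of_real t)" for \<tau>
  have B0: "norm (f 1 - f 0) \<le> 1 * K - 0 * K"
  proof (rule differentiable_bound_general[of 0 1])
    show "continuous_on {0..1} f"
      unfolding f_def z_def
      by (intro continuous_on_compose2[OF DERIV_continuous_on[OF Ei0_deriv]] continuous_intros)
         (use Rez m in \<open>auto simp: z_def complex_nonpos_Reals_iff\<close>, fastforce)
    show "continuous_on {0..1} (\<lambda>\<tau>. \<tau> * K)" by (intro continuous_intros)
    fix \<tau> :: real assume \<tau>: "0 < \<tau>" "\<tau> < 1"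
    have Rz: "Re (z \<tau>) \<ge> m" using Rez \<tau> by auto
    have z0: "z \<tau> \<noteq> 0" using Rz m by auto
    show "(f has_vector_derivative (inverse (z \<tau>) * (w - 1) + ed (- z \<tau> * of_real t) * (- (w - 1) * of_real t))) (at \<tau>)"
      unfolding f_def z_def
      by (rule has_vector_derivative_real_field)
         (use Rz m z0 t in \<open>auto intro!: derivative_eq_intros simp: z_def complex_nonpos_Reals_iff\<close>)
    have key: "inverse (z \<tau>) * (w - 1) + ed (- z \<tau> * of_real t) * (- (w - 1) * of_real t) = (w - 1) * exp (- z \<tau> * of_real t) / z \<tau>"
    proof -
      have nz: "- z \<tau> * of_real t \<noteq> 0" using z0 t by simp
      show ?thesis unfolding ed_eq[OF nz] using z0 t by (simp add: field_simps)
    qed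
    show "((\<lambda>\<tau>. \<tau> * K) has_vector_derivative K) (at \<tau>)"
      unfolding has_real_derivative_iff_has_vector_derivative[symmetric]
      by (auto intro!: derivative_eq_intros)
    have "norm (inverse (z \<tau>) * (w - 1) + ed (- z \<tau> * of_real t) * (- (w - 1) * of_real t))
        = norm ((w - 1) * exp (- z \<tau> * of_real t) / z \<tau>)" by (simp only: key)
    also have "\<dots> = norm (w - 1) * exp (- t * Re (z \<tau>)) / norm (z \<tau>)"
      by (simp add: norm_mult norm_divide norm_exp_eq_Re mult.commute)
    also have "\<dots> \<le> norm (w - 1) * exp (- t * m) / m"
    proof (intro frac_le mult_left_mono)
      show "exp (- t * Re (z \<tau>)) \<le> exp (- t * m)" using Rz t by simp
      show "m \<le> norm (z \<tau>)" using Rz complex_Re_le_cmod[of "z \<tau>"] by linarith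
    qed (use m in auto)
    finally show "norm (inverse (z \<tau>) * (w - 1) + ed (- z \<tau> * of_real t) * (- (w - 1) * of_real t)) \<le> K"
      by (simp add: K_def)
  qed simp
  have eq: "f 1 - f 0 = Ln w + Ei0 (- w * of_real t) - Ei0 (- of_real t)"
    by (simp add: f_def z_def)
  have "norm (f 1 - f 0) \<le> K" using B0 by simp
  then show ?thesis unfolding eq K_def m_def .
qed


lemma exp_neg_lin: assumes "(m::real) > 0" shows "((\<lambda>t. exp (- t * m)) \<longlongrightarrow> 0) at_top"
proof -
  have "filterlim (\<lambda>t. t * m) at_top at_top"
    by (rule filterlim_at_top_mult_tendsto_pos[OF tendsto_const assms filterlim_ident])
  hence "filterlim (\<lambda>t. - (t * m)) at_bot at_top" by (simp add: filterlim_uminus_at_top)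
  from filterlim_compose[OF exp_at_bot this] show ?thesis by simp
qed

lemma HF:
  assumes w: "Re w > 0"
  shows "((\<lambda>t. - euler_mascheroni - Ln w - of_real (ln t) - Ei0 (- w * of_real t)) \<longlongrightarrow> 0) at_top"
proof -
  define m where "m = min 1 (Re w)"
  have m: "m > 0" using w by (simp add: m_def)
  define D where "D t = - (Ln w + Ei0 (- w * of_real t) - Ei0 (- of_real t))" for t
  have D: "(D \<longlongrightarrow> 0) at_top"
  proof (rule Lim_null_comparison)
    show "eventually (\<lambda>t. norm (D t) \<le> norm (w - 1) * exp (- t * m) / m) at_top"
      using eventually_gt_at_top[of "0::real"]
      by eventually_elim (simp only: D_def norm_minus_cancel m_def D_bound[OF w])
    show "((\<lambda>t. norm (w - 1) * exp (- t * m) / m) \<longlongrightarrow> 0) at_top"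
      by (intro tendsto_divide_zero tendsto_mult_right_zero exp_neg_lin m)
  qed
  have "((\<lambda>t. Rf t + D t) \<longlongrightarrow> 0) at_top" using tendsto_add_zero[OF Rf_lim D] .
  moreover have "eventually (\<lambda>t. Rf t + D t = - euler_mascheroni - Ln w - of_real (ln t) - Ei0 (- w * of_real t)) at_top"
    using eventually_gt_at_top[of "0::real"]
    by eventually_elim (simp add: Rf_def D_def Ln_of_real)
  ultimately show ?thesis by (simp only: tendsto_cong[symmetric])
qed


lemma abs_ln_bound:
  assumes t: "(t::real) > 0"
  shows "\<bar>ln t\<bar> \<le> 2 / sqrt t + t"
proof (cases "t \<le> 1")
  case True
  have st: "sqrt t > 0" using t by simp
  have "ln t = 2 * ln (sqrt t)" using t by (simp add: ln_sqrt)
  moreover have "- ln (sqrt t) = ln (1 / sqrt t)" using st by (simp add: ln_div)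
  moreover have "ln (1 / sqrt t) \<le> 1 / sqrt t - 1" using st by (intro ln_le_minus_one) auto
  moreover have "ln t \<le> 0" using True t by simp
  ultimately have "\<bar>ln t\<bar> \<le> 2 / sqrt t" by (simp add: field_simps)
  then show ?thesis using t by simp
next
  case False
  then have "ln t \<le> t - 1" using t by (intro ln_le_minus_one) auto
  moreover have "ln t \<ge> 0" using False by simp
  moreover have "2 / sqrt t \<ge> 0" using t by simp
  ultimately show ?thesis by linarith
qed

lemma integrable_lnln:
  assumes b: "b > (1::real)"
  shows "set_integrable lborel {1<..<b} (\<lambda>y. \<bar>ln (ln y)\<bar>)"
proof -
  define d where "d y = b * (2 / (sqrt (ln y) * y) + ln y / y)" for y
  define F where "F y = b * (4 * sqrt (ln y) + (ln y)^2 / 2)" for y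
  have "set_integrable lborel (einterval (ereal 1) (ereal b)) d"
  proof (rule interval_integral_FTC_nonneg(1))
    show "ereal 1 < ereal b" using b by simp
    fix x assume x: "ereal 1 < ereal x" "ereal x < ereal b"
    hence x1: "x > 1" by simp
    hence lx: "ln x > 0" by simp
    show "DERIV F x :> d x"
      unfolding F_def d_def using x1 lx
      by (auto intro!: derivative_eq_intros simp: field_simps power2_eq_square)
    show "isCont d x" unfolding d_def using x1 lx by (intro continuous_intros) auto
  next
    show "AE x in lborel. ereal 1 < ereal x \<longrightarrow> ereal x < ereal b \<longrightarrow> 0 \<le> d x"
      using b by (intro AE_I2) (auto simp: d_def intro!: mult_nonneg_nonneg add_nonneg_nonneg)
    have "(F \<longlongrightarrow> F 1) (at_right 1)" unfolding F_def
      by (intro tendsto_intros continuous_on_imp_continuous_within) auto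
    then show "((F \<circ> real_of_ereal) \<longlongrightarrow> 0) (at_right (ereal 1))"
      by (simp add: ereal_tendsto_simps1 F_def)
    have "(F \<longlongrightarrow> F b) (at_left b)" unfolding F_def using b
      by (intro tendsto_intros) auto
    then show "((F \<circ> real_of_ereal) \<longlongrightarrow> F b) (at_left (ereal b))"
      by (simp add: ereal_tendsto_simps1)
  qed
  then have I: "set_integrable lborel {1<..<b} d" by simp
  show ?thesis
  proof (rule set_integrable_bound[OF I])
    show "set_borel_measurable lborel {1<..<b} (\<lambda>y. \<bar>ln (ln y)\<bar>)"
      by (simp add: set_borel_measurable_def)
    show "AE x in lborel. x \<in> {1<..<b} \<longrightarrow> norm \<bar>ln (ln x)\<bar> \<le> norm (d x)"
    proof (intro AE_I2 impI)
      fix y assume y: "y \<in> {1<..<b}"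
      hence ly: "ln y > 0" by simp
      have "\<bar>ln (ln y)\<bar> \<le> 2 / sqrt (ln y) + ln y" by (rule abs_ln_bound[OF ly])
      also have "\<dots> \<le> (b / y) * (2 / sqrt (ln y) + ln y)"
      proof -
        have q: "0 \<le> 2 / sqrt (ln y) + ln y" using ly by simp
        have "1 \<le> b / y" using y by simp
        from mult_right_mono[OF this q] show ?thesis by simp
      qed
      also have "\<dots> = d y" using y by (simp add: d_def field_simps)
      finally show "norm \<bar>ln (ln y)\<bar> \<le> norm (d y)" by simp
    qed
  qed
qed

lemma integrable_near1:
  fixes f :: "real \<Rightarrow> complex"
  assumes b: "b > 1" and cont: "continuous_on {1<..<b} f" and AB: "A \<ge> 0" "B \<ge> 0"
    and bnd: "\<And>y. 1 < y \<Longrightarrow> y < b \<Longrightarrow> norm (f y) \<le> A + B * \<bar>ln (ln y)\<bar>"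
  shows "set_integrable lborel {1<..<b} f"
proof -
  have IA: "set_integrable lborel {1<..<b} (\<lambda>y. A)"
    by (rule set_integrable_subset[OF borel_integrable_atLeastAtMost'[of 1 b]]) auto
  have IB: "set_integrable lborel {1<..<b} (\<lambda>y. B * \<bar>ln (ln y)\<bar>)"
    using integrable_lnln[OF b] by (rule set_integrable_mult_right)
  have I: "set_integrable lborel {1<..<b} (\<lambda>y. A + B * \<bar>ln (ln y)\<bar>)"
    by (rule set_integral_add(1)[OF IA IB])
  show ?thesis
  proof (rule set_integrable_bound[OF I])
    show "set_borel_measurable lborel {1<..<b} f"
      using set_measurable_continuous_on[OF _ cont] unfolding set_borel_measurable_def by simp
    show "AE x in lborel. x \<in> {1<..<b} \<longrightarrow> norm (f x) \<le> norm (A + B * \<bar>ln (ln x)\<bar>)"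
      using bnd AB by (intro AE_I2) auto
  qed
qed

lemma integrable_tail:
  fixes f :: "real \<Rightarrow> complex"
  assumes a: "a > 0" and eta: "\<eta> > 0" and cont: "continuous_on {a<..} f"
    and bnd: "\<And>y. a < y \<Longrightarrow> norm (f y) \<le> C * y powr (-1 - \<eta>)"
  shows "set_integrable lborel {a<..} f"
proof -
  define F where "F y = - (y powr (- \<eta>)) / \<eta>" for y :: real
  have "set_integrable lborel (einterval (ereal a) \<infinity>) (\<lambda>y. y powr (-1 - \<eta>))"
  proof (rule interval_integral_FTC_nonneg(1))
    show "ereal a < \<infinity>" by simp
    fix x assume x: "ereal a < ereal x" "ereal x < \<infinity>"
    hence x0: "x > 0" using a by simp
    show "DERIV F x :> x powr (-1 - \<eta>)"
      unfolding F_def using x0 eta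
      by (auto intro!: derivative_eq_intros simp: field_simps powr_diff powr_minus)
    show "isCont (\<lambda>y. y powr (-1 - \<eta>)) x" using x0 by (intro continuous_intros) auto
  next
    show "AE x in lborel. ereal a < ereal x \<longrightarrow> ereal x < \<infinity> \<longrightarrow> 0 \<le> x powr (-1 - \<eta>)"
      by (intro AE_I2) auto
    have "(F \<longlongrightarrow> F a) (at_right a)" unfolding F_def using a eta
      by (intro tendsto_intros) auto
    then show "((F \<circ> real_of_ereal) \<longlongrightarrow> F a) (at_right (ereal a))"
      by (simp add: ereal_tendsto_simps1)
    have "((\<lambda>y. y powr (- \<eta>)) \<longlongrightarrow> 0) at_top"
      using eta by (intro tendsto_neg_powr filterlim_ident) auto
    hence "(F \<longlongrightarrow> 0) at_top" unfolding F_def using tendsto_divide_zero tendsto_minus by fastforce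
    then show "((F \<circ> real_of_ereal) \<longlongrightarrow> 0) (at_left \<infinity>)"
      by (simp add: ereal_tendsto_simps1)
  qed
  then have I: "set_integrable lborel {a<..} (\<lambda>y. C * y powr (-1 - \<eta>))"
    by (intro set_integrable_mult_right) simp
  show ?thesis
  proof (rule set_integrable_bound[OF I])
    show "set_borel_measurable lborel {a<..} f"
      using set_measurable_continuous_on[OF _ cont] unfolding set_borel_measurable_def by simp
    show "AE x in lborel. x \<in> {a<..} \<longrightarrow> norm (f x) \<le> norm (C * x powr (-1 - \<eta>))"
      using bnd by (intro AE_I2) (auto intro: order_trans[OF _ abs_ge_self])
  qed
qed


locale mt =
  fixes \<alpha> s :: complex
  assumes a_notin: "\<alpha> \<notin> complex_of_real ` {0..}" and a_pos: "Re \<alpha> > 0" and s1: "Re s > 1" and sa: "Re s > Re \<alpha>"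
begin

definition w where "w = s - \<alpha>"
definition phic where "phic z = euler_mascheroni + Ln (Ln z) + Ln (- \<alpha>) + Ei0 (\<alpha> * Ln z)"
definition Qc where "Qc z = - phic z / z + Ln (Ln z) + Ei0 ((\<alpha> - 1) * Ln z)"
definition Q1 where "Q1 = - (euler_mascheroni + Ln (- \<alpha>))"
definition Ec where "Ec z = - euler_mascheroni - Ln w - Ln (Ln z) - Ei0 (- w * Ln z)"
definition Pc where "Pc z = - (phic z * exp (- s * Ln z) + Ec z) / s"
definition Hc where "Hc z = ((Qc z - Q1) * exp ((1 - s) * Ln z) - Pc z) / (1 - s)"

lemma a0: "\<alpha> \<noteq> 0" using a_pos by auto
lemma a1: "\<alpha> \<noteq> 1" using a_notin by (metis atLeast_iff image_eqI of_real_1 zero_le_one)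
lemma s0: "s \<noteq> 0" using s1 by auto
lemma s_1: "s \<noteq> 1" using s1 by auto
lemma s_1': "1 - s \<noteq> 0" using s1 by auto
lemma w_pos: "Re w > 0" using sa by (simp add: w_def)

context
  fixes z :: complex
  assumes z: "z \<notin> \<real>\<^sub>\<le>\<^sub>0" "Ln z \<notin> \<real>\<^sub>\<le>\<^sub>0"
begin

lemma z0: "z \<noteq> 0" using z by auto
lemma L0: "Ln z \<noteq> 0" using z by auto

lemma phic_deriv: "(phic has_field_derivative exp (\<alpha> * Ln z) / (Ln z * z)) (at z)"
proof -
  have "(phic has_field_derivative (inverse (Ln z) * inverse z + ed (\<alpha> * Ln z) * (\<alpha> * inverse z))) (at z)"
    unfolding phic_def[abs_def] using z by (auto intro!: derivative_eq_intros)
  moreover have "inverse (Ln z) * inverse z + ed (\<alpha> * Ln z) * (\<alpha> * inverse z) = exp (\<alpha> * Ln z) / (Ln z * z)"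
  proof -
    have "(\<alpha> * Ln z) * ed (\<alpha> * Ln z) = exp (\<alpha> * Ln z) - 1" by (rule ed_mult)
    then show ?thesis using z0 L0 by (simp add: field_simps)
  qed
  ultimately show ?thesis by simp
qed

lemma expL: "exp (Ln z) = z" using z0 by simp

lemma dLn: "(Ln has_field_derivative inverse z) (at z)"
  by (rule has_field_derivative_Ln[OF z(1)])

lemma dLnLn: "((\<lambda>z. Ln (Ln z)) has_field_derivative inverse (Ln z) * inverse z) (at z)"
  by (rule DERIV_chain2[OF has_field_derivative_Ln[OF z(2)] dLn])

lemma dEiL: "((\<lambda>z. Ei0 (c * Ln z)) has_field_derivative ed (c * Ln z) * (c * inverse z)) (at z)"
  by (rule Ei0_deriv_chain[OF DERIV_cmult[OF dLn]])

lemma dexpL: "((\<lambda>z. exp (c * Ln z)) has_field_derivative exp (c * Ln z) * (c * inverse z)) (at z)"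
  by (rule DERIV_chain2[OF DERIV_exp DERIV_cmult[OF dLn]])

lemma Qc_deriv: "(Qc has_field_derivative phic z / z^2) (at z)"
proof -
  have d1: "((\<lambda>z. - phic z / z) has_field_derivative
      ((- (exp (\<alpha> * Ln z) / (Ln z * z))) * z - (- phic z) * 1) / (z * z)) (at z)"
    by (rule DERIV_divide[OF DERIV_minus[OF phic_deriv] DERIV_ident z0])
  have d: "(Qc has_field_derivative
      ((- (exp (\<alpha> * Ln z) / (Ln z * z))) * z - (- phic z) * 1) / (z * z)
      + inverse (Ln z) * inverse z + ed ((\<alpha> - 1) * Ln z) * ((\<alpha> - 1) * inverse z)) (at z)"
    unfolding Qc_def[abs_def] by (intro DERIV_add d1 dLnLn dEiL)
  have nz: "(\<alpha> - 1) * Ln z \<noteq> 0" using a1 L0 by simp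
  have e1: "exp ((\<alpha> - 1) * Ln z) = exp (\<alpha> * Ln z) / z"
    using z0 by (simp add: algebra_simps exp_diff expL)
  have ed1: "ed ((\<alpha> - 1) * Ln z) = (exp (\<alpha> * Ln z) / z - 1) / ((\<alpha> - 1) * Ln z)"
    unfolding ed_eq[OF nz] e1 ..
  show ?thesis
  proof (rule DERIV_cong[OF d])
    show "((- (exp (\<alpha> * Ln z) / (Ln z * z))) * z - (- phic z) * 1) / (z * z)
      + inverse (Ln z) * inverse z + ed ((\<alpha> - 1) * Ln z) * ((\<alpha> - 1) * inverse z) = phic z / z^2"
      unfolding ed1 using z0 L0 a1 by (simp add: field_simps power2_eq_square)
  qed
qed

lemma Pc_deriv: "(Pc has_field_derivative phic z * exp (- s * Ln z) / z) (at z)"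
proof -
  have dEc: "(Ec has_field_derivative 0 - 0 - inverse (Ln z) * inverse z - ed (- w * Ln z) * (- w * inverse z)) (at z)"
    unfolding Ec_def[abs_def] by (intro DERIV_diff DERIV_const dLnLn dEiL)
  have dpr: "((\<lambda>z. phic z * exp (- s * Ln z)) has_field_derivative
     exp (\<alpha> * Ln z) / (Ln z * z) * exp (- s * Ln z) + exp (- s * Ln z) * (- s * inverse z) * phic z) (at z)"
    by (rule DERIV_mult[OF phic_deriv dexpL])
  have d: "(Pc has_field_derivative - (exp (\<alpha> * Ln z) / (Ln z * z) * exp (- s * Ln z) + exp (- s * Ln z) * (- s * inverse z) * phic z
      + (0 - 0 - inverse (Ln z) * inverse z - ed (- w * Ln z) * (- w * inverse z))) / s) (at z)"
    unfolding Pc_def[abs_def] by (intro DERIV_cdivide DERIV_minus DERIV_add dpr dEc)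
  have nz: "- w * Ln z \<noteq> 0" using w_pos L0 by auto
  have e1: "exp (- w * Ln z) = exp (\<alpha> * Ln z) * exp (- s * Ln z)"
    by (simp add: w_def algebra_simps flip: exp_add)
  have ed1: "ed (- w * Ln z) = (exp (\<alpha> * Ln z) * exp (- s * Ln z) - 1) / (- w * Ln z)"
    unfolding ed_eq[OF nz] e1 ..
  show ?thesis
    by (rule DERIV_cong[OF d], unfold ed1) (use z0 L0 s0 nz in \<open>simp add: field_simps\<close>)
qed

lemma Hc_deriv: "(Hc has_field_derivative (Qc z - Q1) * exp (- s * Ln z)) (at z)"
proof -
  have d: "(Hc has_field_derivative ((phic z / z^2 - 0) * exp ((1 - s) * Ln z)
      + exp ((1 - s) * Ln z) * ((1 - s) * inverse z) * (Qc z - Q1) - phic z * exp (- s * Ln z) / z) / (1 - s)) (at z)"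
    unfolding Hc_def[abs_def] by (intro DERIV_cdivide DERIV_diff DERIV_mult DERIV_const Qc_deriv dexpL Pc_deriv)
  have e1: "exp ((1 - s) * Ln z) = z * exp (- s * Ln z)"
    by (simp add: algebra_simps exp_diff expL exp_minus field_simps)
  show ?thesis
    by (rule DERIV_cong[OF d], unfold e1) (use z0 L0 s_1' in \<open>simp add: field_simps power2_eq_square\<close>)
qed

end
end


lemma isCont_Ei0 [continuous_intros]: "isCont f x \<Longrightarrow> isCont (\<lambda>x. Ei0 (f x)) x"
  by (rule isCont_o2[OF _ DERIV_isCont[OF Ei0_deriv]])

lemma continuous_on_Ei0 [continuous_intros]: "continuous_on S f \<Longrightarrow> continuous_on S (\<lambda>x. Ei0 (f x))"
  by (rule continuous_on_compose2[OF DERIV_continuous_on[OF Ei0_deriv]]) auto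

lemma tendsto_Ei0 [tendsto_intros]: "(f \<longlongrightarrow> a) F \<Longrightarrow> ((\<lambda>x. Ei0 (f x)) \<longlongrightarrow> Ei0 a) F"
  by (rule isCont_tendsto_compose[OF DERIV_isCont[OF Ei0_deriv]])

lemma lnexp_lim: "a < (0::real) \<Longrightarrow> ((\<lambda>t. (K + \<bar>ln t\<bar>) * exp (a * t)) \<longlongrightarrow> 0) at_top"
  by real_asymp

lemma exp_lim: "a < (0::real) \<Longrightarrow> ((\<lambda>t. K * exp (a * t)) \<longlongrightarrow> 0) at_top"
  by real_asymp

context mt
begin

lemma Ln_real: "1 < x \<Longrightarrow> Ln (complex_of_real x) = of_real (ln x)"
  by (simp add: Ln_of_real)

lemma zreal: assumes "1 < x" shows "complex_of_real x \<notin> \<real>\<^sub>\<le>\<^sub>0" "Ln (complex_of_real x) \<notin> \<real>\<^sub>\<le>\<^sub>0"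
  using assms by (auto simp: Ln_real complex_nonpos_Reals_iff)

lemma Lnln_real: "1 < x \<Longrightarrow> Ln (complex_of_real (ln x)) = of_real (ln (ln x))"
  by (rule Ln_of_real) simp

lemma LnLn_real: "1 < x \<Longrightarrow> Ln (Ln (complex_of_real x)) = of_real (ln (ln x))"
  by (simp add: Ln_real Lnln_real)

lemma phi_eq: "1 < x \<Longrightarrow> phi \<alpha> x = phic (of_real x)"
  by (simp add: phi_def phic_def Ln_real)

definition \<delta> where "\<delta> = min (Re s - Re \<alpha>) (Re s - 1) / 3"
definition cA where "cA = Re \<alpha> + \<delta>"
definition cB where "cB = max (Re \<alpha> - 1) 0 + \<delta>"
definition MA where "MA = (SOME M. M \<ge> 0 \<and> (\<forall>t\<ge>0. norm (Ei0 (\<alpha> * of_real t)) \<le> M * exp (cA * t)))"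
definition MB where "MB = (SOME M. M \<ge> 0 \<and> (\<forall>t\<ge>0. norm (Ei0 ((\<alpha> - 1) * of_real t)) \<le> M * exp (cB * t)))"
definition K0 where "K0 = norm (euler_mascheroni :: complex) + norm (Ln (- \<alpha>))"

lemma \<delta>_pos: "\<delta> > 0" using s1 sa by (simp add: \<delta>_def)
lemma \<delta>_le1: "3 * \<delta> \<le> Re s - Re \<alpha>" "3 * \<delta> \<le> Re s - 1" by (simp_all add: \<delta>_def)
lemma cA_pos: "cA > 0" using a_pos \<delta>_pos by (simp add: cA_def)
lemma cB_pos: "cB > 0" using \<delta>_pos by (simp add: cB_def)

lemma MA: "MA \<ge> 0" "\<And>t. t \<ge> 0 \<Longrightarrow> norm (Ei0 (\<alpha> * of_real t)) \<le> MA * exp (cA * t)"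
proof -
  have "\<exists>M\<ge>0. \<forall>t\<ge>0. norm (Ei0 (\<alpha> * of_real t)) \<le> M * exp (cA * t)"
    by (rule Ei0_growth) (use cA_pos in \<open>auto simp: cA_def \<delta>_pos less_imp_le\<close>)
  from someI_ex[OF this[unfolded Bex_def]] show "MA \<ge> 0" "\<And>t. t \<ge> 0 \<Longrightarrow> norm (Ei0 (\<alpha> * of_real t)) \<le> MA * exp (cA * t)"
    unfolding MA_def by blast+
qed

lemma MB: "MB \<ge> 0" "\<And>t. t \<ge> 0 \<Longrightarrow> norm (Ei0 ((\<alpha> - 1) * of_real t)) \<le> MB * exp (cB * t)"
proof -
  have "\<exists>M\<ge>0. \<forall>t\<ge>0. norm (Ei0 ((\<alpha> - 1) * of_real t)) \<le> M * exp (cB * t)"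
    by (rule Ei0_growth) (use cB_pos \<delta>_pos in \<open>auto simp: cB_def\<close>)
  from someI_ex[OF this[unfolded Bex_def]] show "MB \<ge> 0" "\<And>t. t \<ge> 0 \<Longrightarrow> norm (Ei0 ((\<alpha> - 1) * of_real t)) \<le> MB * exp (cB * t)"
    unfolding MB_def by blast+
qed

lemma phic_real: "1 < y \<Longrightarrow> phic (of_real y) = euler_mascheroni + of_real (ln (ln y)) + Ln (- \<alpha>) + Ei0 (\<alpha> * of_real (ln y))"
  by (simp add: phic_def Ln_real Lnln_real)

lemma phic_bound:
  assumes y: "1 < y"
  shows "norm (phic (of_real y)) \<le> K0 + \<bar>ln (ln y)\<bar> + MA * exp (cA * ln y)"
proof -
  have "norm (phic (of_real y)) \<le> norm (euler_mascheroni :: complex) + norm (of_real (ln (ln y)) :: complex) + norm (Ln (- \<alpha>)) + norm (Ei0 (\<alpha> * of_real (ln y)))"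
    unfolding phic_real[OF y] by (intro norm_triangle_le add_mono order_refl norm_triangle_ineq)
  also have "\<dots> \<le> norm (euler_mascheroni :: complex) + \<bar>ln (ln y)\<bar> + norm (Ln (- \<alpha>)) + MA * exp (cA * ln y)"
    using MA(2)[of "ln y"] y by simp
  finally show ?thesis by (simp add: K0_def)
qed

definition Bd where "Bd t = (K0 + \<bar>ln t\<bar> + MA * exp (cA * t)) * exp (- t) + \<bar>ln t\<bar> + MB * exp (cB * t) + norm Q1" for t :: real

lemma Qc_real: "1 < y \<Longrightarrow> Qc (of_real y) = - phic (of_real y) / of_real y + of_real (ln (ln y)) + Ei0 ((\<alpha> - 1) * of_real (ln y))"
  by (simp add: Qc_def Ln_real Lnln_real)

lemma Gr_bound:
  assumes y: "1 < y"
  shows "norm (Qc (of_real y) - Q1) \<le> Bd (ln y)"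
proof -
  have "norm (Qc (of_real y) - Q1) \<le> norm (phic (of_real y) / of_real y) + norm (of_real (ln (ln y)) :: complex) + norm (Ei0 ((\<alpha> - 1) * of_real (ln y))) + norm Q1"
    unfolding Qc_real[OF y]
    by (rule order_trans[OF norm_triangle_ineq4] , intro add_mono order_refl order_trans[OF norm_triangle_ineq] )
       (auto intro: order_trans[OF norm_triangle_ineq])
  also have "norm (phic (of_real y) / of_real y) = norm (phic (of_real y)) * exp (- ln y)"
    using y by (simp add: norm_mult norm_inverse exp_minus divide_inverse)
  also have "\<dots> \<le> (K0 + \<bar>ln (ln y)\<bar> + MA * exp (cA * ln y)) * exp (- ln y)"
    by (intro mult_right_mono phic_bound y) auto
  also have "norm (Ei0 ((\<alpha> - 1) * of_real (ln y))) \<le> MB * exp (cB * ln y)"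
    using MB(2)[of "ln y"] y by simp
  finally show ?thesis by (simp add: Bd_def)
qed

lemma Bd_nonneg: "Bd t \<ge> 0"
  using MA(1) MB(1) by (simp add: Bd_def K0_def)

lemma Bd_lim: "((\<lambda>t. Bd t * exp ((1 + \<delta> - Re s) * t)) \<longlongrightarrow> 0) at_top"
proof -
  define b where "b = 1 + \<delta> - Re s"
  have neg: "b - 1 < 0" "cA - 1 + b < 0" "b < 0" "cB + b < 0"
    using \<delta>_pos \<delta>_le1 by (auto simp: b_def cA_def cB_def max_def)
  have eq: "Bd t * exp (b * t) = (K0 + \<bar>ln t\<bar>) * exp ((b - 1) * t) + MA * exp ((cA - 1 + b) * t)
            + (norm Q1 + \<bar>ln t\<bar>) * exp (b * t) + MB * exp ((cB + b) * t)" for t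
  proof -
    have f1: "exp ((b - 1) * t) = exp (- t) * exp (b * t)" by (simp add: algebra_simps flip: exp_add)
    have f2: "exp ((cA - 1 + b) * t) = exp (cA * t) * exp (- t) * exp (b * t)" by (simp add: algebra_simps flip: exp_add)
    have f3: "exp ((cB + b) * t) = exp (cB * t) * exp (b * t)" by (simp add: algebra_simps flip: exp_add)
    show ?thesis unfolding f1 f2 f3 Bd_def by (simp add: algebra_simps)
  qed
  have "((\<lambda>t. (K0 + \<bar>ln t\<bar>) * exp ((b - 1) * t) + MA * exp ((cA - 1 + b) * t)
            + (norm Q1 + \<bar>ln t\<bar>) * exp (b * t) + MB * exp ((cB + b) * t)) \<longlongrightarrow> 0 + 0 + 0 + 0) at_top"
    by (intro tendsto_add lnexp_lim exp_lim neg)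
  then show ?thesis unfolding b_def[symmetric] eq by simp
qed

lemma phic_lim: "((\<lambda>t. (K0 + \<bar>ln t\<bar> + MA * exp (cA * t)) * exp (- Re s * t)) \<longlongrightarrow> 0) at_top"
proof -
  have neg: "- Re s < 0" "cA - Re s < 0" using s1 \<delta>_pos \<delta>_le1 by (auto simp: cA_def)
  have eq: "(K0 + \<bar>ln t\<bar> + MA * exp (cA * t)) * exp (- Re s * t) = (K0 + \<bar>ln t\<bar>) * exp (- Re s * t) + MA * exp ((cA - Re s) * t)" for t
  proof -
    have f: "exp ((cA - Re s) * t) = exp (cA * t) * exp (- Re s * t)" by (simp add: algebra_simps flip: exp_add)
    show ?thesis unfolding f by (simp add: algebra_simps)
  qed
  have "((\<lambda>t. (K0 + \<bar>ln t\<bar>) * exp (- Re s * t) + MA * exp ((cA - Re s) * t)) \<longlongrightarrow> 0 + 0) at_top"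
    by (intro tendsto_add lnexp_lim exp_lim neg)
  then show ?thesis unfolding eq by simp
qed

lemma norm_exp_Ln: "1 < y \<Longrightarrow> norm (exp (c * Ln (complex_of_real y))) = exp (Re c * ln y)"
  by (simp add: Ln_real norm_exp_eq_Re)

lemma top_P: "((\<lambda>y. Pc (of_real y)) \<longlongrightarrow> 0) at_top"
proof -
  have A: "((\<lambda>y. phic (of_real y) * exp (- s * Ln (of_real y))) \<longlongrightarrow> 0) at_top"
  proof (rule Lim_null_comparison)
    show "((\<lambda>y. (K0 + \<bar>ln (ln y)\<bar> + MA * exp (cA * ln y)) * exp (- Re s * ln y)) \<longlongrightarrow> 0) at_top"
      using filterlim_compose[OF phic_lim ln_at_top] by simp
    show "eventually (\<lambda>y. norm (phic (of_real y) * exp (- s * Ln (of_real y))) \<le> (K0 + \<bar>ln (ln y)\<bar> + MA * exp (cA * ln y)) * exp (- Re s * ln y)) at_top"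
      using eventually_gt_at_top[of "1::real"]
    proof eventually_elim
      case (elim y)
      show ?case unfolding norm_mult norm_exp_Ln[OF elim] uminus_complex.sel
        by (intro mult_right_mono phic_bound elim) auto
    qed
  qed
  have B: "((\<lambda>y. Ec (of_real y)) \<longlongrightarrow> 0) at_top"
  proof -
    have "((\<lambda>y. - euler_mascheroni - Ln w - of_real (ln (ln y)) - Ei0 (- w * of_real (ln y))) \<longlongrightarrow> 0) at_top"
      using filterlim_compose[OF HF[OF w_pos] ln_at_top] by simp
    moreover have "eventually (\<lambda>y. - euler_mascheroni - Ln w - of_real (ln (ln y)) - Ei0 (- w * of_real (ln y)) = Ec (of_real y)) at_top"
      using eventually_gt_at_top[of "1::real"]
      by eventually_elim (simp add: Ec_def Ln_real Lnln_real)
    ultimately show ?thesis by (simp only: tendsto_cong)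
  qed
  have "((\<lambda>y. - (phic (of_real y) * exp (- s * Ln (of_real y)) + Ec (of_real y)) / s) \<longlongrightarrow> - (0 + 0) / s) at_top"
    using s0 by (intro tendsto_intros A B)
  then show ?thesis by (simp add: Pc_def)
qed

lemma top_G: "((\<lambda>y. (Qc (of_real y) - Q1) * exp ((1 - s) * Ln (of_real y))) \<longlongrightarrow> 0) at_top"
proof (rule Lim_null_comparison)
  show "((\<lambda>y. Bd (ln y) * exp ((1 + \<delta> - Re s) * ln y)) \<longlongrightarrow> 0) at_top"
    using filterlim_compose[OF Bd_lim ln_at_top] by simp
  show "eventually (\<lambda>y. norm ((Qc (of_real y) - Q1) * exp ((1 - s) * Ln (of_real y))) \<le> Bd (ln y) * exp ((1 + \<delta> - Re s) * ln y)) at_top"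
    using eventually_gt_at_top[of "1::real"]
  proof eventually_elim
    case (elim y)
    have "exp ((1 - Re s) * ln y) \<le> exp ((1 + \<delta> - Re s) * ln y)"
      using elim \<delta>_pos by (simp add: mult_right_mono)
    then show ?case unfolding norm_mult norm_exp_Ln[OF elim] uminus_complex.sel
      by (intro mult_mono Gr_bound elim Bd_nonneg) auto
  qed
qed

lemma tail_bound: "eventually (\<lambda>y. norm ((Qc (of_real y) - Q1) * exp (- s * Ln (of_real y))) \<le> 1 * y powr (-1 - \<delta>)) at_top"
proof -
  have "eventually (\<lambda>y. Bd (ln y) * exp ((1 + \<delta> - Re s) * ln y) < 1) at_top"
    using filterlim_compose[OF Bd_lim ln_at_top] by (rule order_tendstoD) simp
  then show ?thesis using eventually_gt_at_top[of "1::real"]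
  proof eventually_elim
    case (elim y)
    have "norm ((Qc (of_real y) - Q1) * exp (- s * Ln (of_real y))) \<le> Bd (ln y) * exp (- Re s * ln y)"
      unfolding norm_mult norm_exp_Ln[OF elim(2)] uminus_complex.sel by (intro mult_right_mono Gr_bound elim) auto
    also have "\<dots> = Bd (ln y) * exp ((1 + \<delta> - Re s) * ln y) * exp ((-1 - \<delta>) * ln y)"
      by (simp add: algebra_simps flip: exp_add)
    also have "\<dots> \<le> 1 * exp ((-1 - \<delta>) * ln y)"
      using elim by (intro mult_right_mono) auto
    also have "exp ((-1 - \<delta>) * ln y) = y powr (-1 - \<delta>)"
      using elim by (simp add: powr_def)
    finally show ?case .
  qed
qed

lemma lnln_lim1: "((\<lambda>y::real. ln (ln y) * (1 - 1 / y)) \<longlongrightarrow> 0) (at_right 1)"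
  by real_asymp

lemma lnln_lim2: "c > 0 \<Longrightarrow> ((\<lambda>y::real. \<bar>ln (ln y)\<bar> * (c * ln y * exp (c * ln y))) \<longlongrightarrow> 0) (at_right 1)"
  by real_asymp

lemma ev_right1: "eventually (\<lambda>y. 1 < y) (at_right (1::real))"
  by (rule eventually_at_right_less)

lemma near1_Q: "((\<lambda>y. Qc (of_real y)) \<longlongrightarrow> Q1) (at_right 1)"
proof -
  define R where "R y = - (euler_mascheroni + Ln (- \<alpha>) + Ei0 (\<alpha> * of_real (ln y))) / of_real y + Ei0 ((\<alpha> - 1) * of_real (ln y))" for y :: real
  have "((\<lambda>y. of_real (ln (ln y) * (1 - 1 / y)) + R y) \<longlongrightarrow> of_real 0 + (- (euler_mascheroni + Ln (- \<alpha>) + Ei0 (\<alpha> * of_real (ln 1))) / of_real 1 + Ei0 ((\<alpha> - 1) * of_real (ln 1)))) (at_right 1)"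
    unfolding R_def by (intro tendsto_intros lnln_lim1 continuous_on_imp_continuous_within[where s = "{0<..}"]) (auto intro!: continuous_intros)
  moreover have "eventually (\<lambda>y. of_real (ln (ln y) * (1 - 1 / y)) + R y = Qc (of_real y)) (at_right 1)"
    using ev_right1 by eventually_elim (simp add: R_def Qc_real phic_real field_simps)
  ultimately show ?thesis by (simp add: tendsto_cong Q1_def)
qed

definition P1 where "P1 = - (Ln (- \<alpha>) - Ln w) / s"

lemma near1_P: "((\<lambda>y. Pc (of_real y)) \<longlongrightarrow> P1) (at_right 1)"
proof -
  define R where "R y = (euler_mascheroni + Ln (- \<alpha>) + Ei0 (\<alpha> * of_real (ln y))) * exp (- s * of_real (ln y)) - euler_mascheroni - Ln w - Ei0 (- w * of_real (ln y))" for y :: real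
  define T where "T y = of_real (ln (ln y)) * (exp (- s * of_real (ln y)) - 1)" for y :: real
  have T: "(T \<longlongrightarrow> 0) (at_right 1)"
  proof (rule Lim_null_comparison)
    have "norm s > 0" using s0 by simp
    then show "((\<lambda>y::real. \<bar>ln (ln y)\<bar> * (norm s * ln y * exp (norm s * ln y))) \<longlongrightarrow> 0) (at_right 1)"
      by (rule lnln_lim2)
    show "eventually (\<lambda>y. norm (T y) \<le> \<bar>ln (ln y)\<bar> * (norm s * ln y * exp (norm s * ln y))) (at_right 1)"
      using ev_right1
    proof eventually_elim
      case (elim y)
      have "norm (exp (- s * of_real (ln y)) - 1) \<le> norm (- s * of_real (ln y)) * exp (norm (- s * of_real (ln y)))"
        by (rule norm_exp_minus1)
      also have "norm (- s * of_real (ln y)) = norm s * ln y" using elim by (simp add: norm_mult)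
      finally show ?case unfolding T_def norm_mult norm_of_real by (rule mult_left_mono) auto
    qed
  qed
  have Rl: "(R \<longlongrightarrow> (euler_mascheroni + Ln (- \<alpha>) + Ei0 (\<alpha> * of_real (ln 1))) * exp (- s * of_real (ln 1)) - euler_mascheroni - Ln w - Ei0 (- w * of_real (ln 1))) (at_right 1)"
    unfolding R_def by (intro tendsto_intros continuous_on_imp_continuous_within[where s = "{0<..}"]) (auto intro!: continuous_intros)
  have "((\<lambda>y. - (T y + R y) / s) \<longlongrightarrow> - (0 + (Ln (- \<alpha>) - Ln w)) / s) (at_right 1)"
    using s0 by (intro tendsto_intros T) (use Rl in simp)
  moreover have "eventually (\<lambda>y. - (T y + R y) / s = Pc (of_real y)) (at_right 1)"
    using ev_right1 by eventually_elim (simp add: R_def T_def Pc_def Ec_def phic_real Ln_real Lnln_real algebra_simps)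
  ultimately show ?thesis by (simp add: tendsto_cong P1_def)
qed

lemma near1_H: "((\<lambda>y. Hc (of_real y)) \<longlongrightarrow> - P1 / (1 - s)) (at_right 1)"
proof -
  have "((\<lambda>y. ((Qc (of_real y) - Q1) * exp ((1 - s) * of_real (ln y)) - Pc (of_real y)) / (1 - s)) \<longlongrightarrow> ((Q1 - Q1) * exp ((1 - s) * of_real (ln 1)) - P1) / (1 - s)) (at_right 1)"
    using s_1' by (intro tendsto_intros near1_Q near1_P continuous_on_imp_continuous_within[where s = "{0<..}"]) (auto intro!: continuous_intros)
  moreover have "eventually (\<lambda>y. ((Qc (of_real y) - Q1) * exp ((1 - s) * of_real (ln y)) - Pc (of_real y)) / (1 - s) = Hc (of_real y)) (at_right 1)"
    using ev_right1 by eventually_elim (simp add: Hc_def Ln_real)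
  ultimately show ?thesis by (simp add: tendsto_cong)
qed

lemma top_H: "((\<lambda>y. Hc (of_real y)) \<longlongrightarrow> 0) at_top"
proof -
  have "((\<lambda>y. ((Qc (of_real y) - Q1) * exp ((1 - s) * Ln (of_real y)) - Pc (of_real y)) / (1 - s)) \<longlongrightarrow> (0 - 0) / (1 - s)) at_top"
    using s_1' by (intro tendsto_intros top_G top_P)
  then show ?thesis by (simp add: Hc_def[abs_def])
qed

end


context mt
begin

lemma isCont_of_real_comp:
  assumes "(f has_field_derivative D) (at (complex_of_real y))"
  shows "isCont (\<lambda>y. f (complex_of_real y)) y"
proof -
  have "isCont complex_of_real y" by (intro continuous_intros)
  from isCont_o2[OF this DERIV_isCont[OF assms]] show ?thesis .
qed

lemma cont_phi: "1 < y \<Longrightarrow> isCont (phi \<alpha>) y"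
  unfolding phi_def[abs_def] by (intro continuous_intros) (auto simp: complex_nonpos_Reals_iff)

lemma Bd_le:
  assumes "0 < t" "t \<le> T"
  shows "Bd t \<le> (K0 + MA * exp (cA * T) + MB * exp (cB * T) + norm Q1) + 2 * \<bar>ln t\<bar>"
proof -
  have e: "exp (- t) \<le> 1" using assms by simp
  have n: "0 \<le> K0 + \<bar>ln t\<bar> + MA * exp (cA * t)" using MA(1) by (simp add: K0_def)
  have "(K0 + \<bar>ln t\<bar> + MA * exp (cA * t)) * exp (- t) \<le> K0 + \<bar>ln t\<bar> + MA * exp (cA * t)"
    using mult_left_mono[OF e n] by simp
  moreover have "MA * exp (cA * t) \<le> MA * exp (cA * T)"
    using assms MA(1) cA_pos by (intro mult_left_mono) auto
  moreover have "MB * exp (cB * t) \<le> MB * exp (cB * T)"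
    using assms MB(1) cB_pos by (intro mult_left_mono) auto
  ultimately show ?thesis unfolding Bd_def by linarith
qed

lemma Gint:
  assumes x: "1 < x"
  shows "(LBINT y:{1<..x}. phi \<alpha> y / of_real (y^2)) = Qc (of_real x) - Q1"
proof -
  have "(LBINT y=ereal 1..ereal x. phi \<alpha> y / of_real (y^2)) = Qc (of_real x) - Q1"
  proof (rule interval_integral_FTC_integrable[where F = "\<lambda>y. Qc (of_real y)"])
    show "ereal 1 < ereal x" using x by simp
    fix y assume "ereal 1 < ereal y" "ereal y < ereal x"
    hence y: "1 < y" "y < x" by auto
    have "((\<lambda>y. Qc (of_real y)) has_vector_derivative phic (of_real y) / (of_real y)^2) (at y)"
      by (rule has_vector_derivative_real_field[OF Qc_deriv[OF zreal[OF y(1)]]])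
    then show "((\<lambda>y. Qc (of_real y)) has_vector_derivative phi \<alpha> y / of_real (y^2)) (at y)"
      using y by (simp add: phi_eq)
    show "isCont (\<lambda>y. phi \<alpha> y / of_real (y^2)) y"
      using y by (intro continuous_intros cont_phi) auto
  next
    have "set_integrable lborel {1<..<x} (\<lambda>y. phi \<alpha> y / of_real (y^2))"
    proof (rule integrable_near1[OF x _ _ zero_le_one])
      show "continuous_on {1<..<x} (\<lambda>y. phi \<alpha> y / of_real (y^2))"
        by (intro continuous_at_imp_continuous_on ballI continuous_intros cont_phi) auto
      show "0 \<le> K0 + MA * exp (cA * ln x)" using MA(1) by (simp add: K0_def)
      fix y assume y: "1 < y" "y < x"
      have "norm (phi \<alpha> y / of_real (y^2)) = norm (phic (of_real y)) / y^2"
        using y by (simp add: phi_eq norm_divide norm_power)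
      also have "\<dots> \<le> norm (phic (of_real y))"
      proof -
        have "1 \<le> y^2" using y by (intro one_le_power) auto
        then have "norm (phic (of_real y)) / y^2 \<le> norm (phic (of_real y)) / 1"
          by (intro frac_le) auto
        then show ?thesis by simp
      qed
      also have "\<dots> \<le> K0 + \<bar>ln (ln y)\<bar> + MA * exp (cA * ln y)" by (rule phic_bound[OF y(1)])
      also have "MA * exp (cA * ln y) \<le> MA * exp (cA * ln x)"
        using y MA(1) cA_pos by (intro mult_left_mono) auto
      finally show "norm (phi \<alpha> y / of_real (y^2)) \<le> K0 + MA * exp (cA * ln x) + 1 * \<bar>ln (ln y)\<bar>"
        by simp
    qed
    then show "set_integrable lborel (einterval (ereal 1) (ereal x)) (\<lambda>y. phi \<alpha> y / of_real (y^2))"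
      by simp
    show "(((\<lambda>y. Qc (of_real y)) \<circ> real_of_ereal) \<longlongrightarrow> Q1) (at_right (ereal 1))"
      unfolding ereal_tendsto_simps1 by (rule near1_Q)
    have "isCont (\<lambda>y. Qc (of_real y)) x"
      by (rule isCont_of_real_comp[OF Qc_deriv[OF zreal[OF x]]])
    then have "((\<lambda>y. Qc (of_real y)) \<longlongrightarrow> Qc (of_real x)) (at_left x)"
      using continuous_within continuous_at_imp_continuous_at_within by blast
    then show "(((\<lambda>y. Qc (of_real y)) \<circ> real_of_ereal) \<longlongrightarrow> Qc (of_real x)) (at_left (ereal x))"
      unfolding ereal_tendsto_simps1 .
  qed
  then show ?thesis using x by (simp add: interval_integral_Ioc)
qed

definition kf where "kf y = (Qc (of_real y) - Q1) * exp (- s * Ln (of_real y))" for y :: real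

lemma kf_cont: "1 < y \<Longrightarrow> isCont kf y"
  unfolding kf_def[abs_def]
  by (intro continuous_intros isCont_of_real_comp[OF Qc_deriv[OF zreal]]) (auto simp: complex_nonpos_Reals_iff)

lemma kf_integrable: "set_integrable lborel {1<..} kf"
proof -
  obtain X0 where X0: "\<And>y. y \<ge> X0 \<Longrightarrow> norm (kf y) \<le> 1 * y powr (-1 - \<delta>)"
    using tail_bound unfolding kf_def eventually_at_top_linorder by blast
  define X where "X = max X0 2"
  have X: "X \<ge> 2" "\<And>y. y > X \<Longrightarrow> norm (kf y) \<le> 1 * y powr (-1 - \<delta>)"
    using X0 by (auto simp: X_def)
  have I1: "set_integrable lborel {X<..} kf"
  proof (rule integrable_tail[OF _ \<delta>_pos])
    show "0 < X" using X by simp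
    show "continuous_on {X<..} kf" using X by (intro continuous_at_imp_continuous_on ballI kf_cont) auto
    show "\<And>y. X < y \<Longrightarrow> norm (kf y) \<le> 1 * y powr (-1 - \<delta>)" by (rule X(2))
  qed
  have I2: "set_integrable lborel {1<..<X+1} kf"
  proof (rule integrable_near1[where B = 2])
    show "1 < X + 1" using X by simp
    show "continuous_on {1<..<X+1} kf" by (intro continuous_at_imp_continuous_on ballI kf_cont) auto
    show "0 \<le> K0 + MA * exp (cA * ln (X + 1)) + MB * exp (cB * ln (X + 1)) + norm Q1"
      using MA(1) MB(1) by (simp add: K0_def)
    fix y assume y: "1 < y" "y < X + 1"
    have "norm (kf y) = norm (Qc (of_real y) - Q1) * exp (- Re s * ln y)"
      unfolding kf_def norm_mult norm_exp_Ln[OF y(1)] by simp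
    also have "\<dots> \<le> norm (Qc (of_real y) - Q1) * 1"
      using y s1 by (intro mult_left_mono) auto
    also have "\<dots> \<le> Bd (ln y)" using Gr_bound[OF y(1)] by simp
    also have "\<dots> \<le> (K0 + MA * exp (cA * ln (X + 1)) + MB * exp (cB * ln (X + 1)) + norm Q1) + 2 * \<bar>ln (ln y)\<bar>"
      using y X by (intro Bd_le) auto
    finally show "norm (kf y) \<le> K0 + MA * exp (cA * ln (X + 1)) + MB * exp (cB * ln (X + 1)) + norm Q1 + 2 * \<bar>ln (ln y)\<bar>" .
  qed (simp)
  have "set_integrable lborel ({1<..<X+1} \<union> {X<..}) kf"
    by (rule set_integrable_Un[OF I2 I1]) auto
  moreover have "{1<..<X+1} \<union> {X<..} = {1<..}" using X by auto
  ultimately show ?thesis by simp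
qed

lemma kf_integral: "(LBINT y:{1<..}. kf y) = P1 / (1 - s)"
proof -
  have "(LBINT y=ereal 1..\<infinity>. kf y) = 0 - (- P1 / (1 - s))"
  proof (rule interval_integral_FTC_integrable[where F = "\<lambda>y. Hc (of_real y)"])
    show "ereal 1 < \<infinity>" by simp
    fix y assume "ereal 1 < ereal y" "ereal y < \<infinity>"
    hence y: "1 < y" by auto
    show "((\<lambda>y. Hc (of_real y)) has_vector_derivative kf y) (at y)"
      unfolding kf_def by (rule has_vector_derivative_real_field[OF Hc_deriv[OF zreal[OF y]]])
    show "isCont kf y" by (rule kf_cont[OF y])
  next
    show "set_integrable lborel (einterval (ereal 1) \<infinity>) kf" using kf_integrable by simp
    show "(((\<lambda>y. Hc (of_real y)) \<circ> real_of_ereal) \<longlongrightarrow> - P1 / (1 - s)) (at_right (ereal 1))"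
      unfolding ereal_tendsto_simps1 by (rule near1_H)
    show "(((\<lambda>y. Hc (of_real y)) \<circ> real_of_ereal) \<longlongrightarrow> 0) (at_left \<infinity>)"
      unfolding ereal_tendsto_simps1 by (rule top_H)
  qed
  then show ?thesis by (simp add: interval_integral_Ioi)
qed

lemma integrand_eq:
  assumes x: "1 < x"
  shows "Phi \<alpha> x / of_real x powr (s + 1) = kf x"
proof -
  have xn: "complex_of_real x \<noteq> 0" using x by simp
  have "Phi \<alpha> x = of_real x * (Qc (of_real x) - Q1)" unfolding Phi_def Gint[OF x] ..
  moreover have "complex_of_real x powr (s + 1) = exp ((s + 1) * Ln (of_real x))"
    using xn by (simp add: powr_def)
  moreover have "complex_of_real x = exp (Ln (of_real x))" using xn by simp
  ultimately have "Phi \<alpha> x / of_real x powr (s + 1) = exp (Ln (of_real x)) * (Qc (of_real x) - Q1) / exp ((s + 1) * Ln (of_real x))"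
    by simp
  also have "\<dots> = (Qc (of_real x) - Q1) * exp (- s * Ln (of_real x))"
  proof -
    define L where "L = Ln (complex_of_real x)"
    have e: "exp ((s + 1) * L) = exp L * exp (s * L)" by (simp add: algebra_simps flip: exp_add)
    have e2: "exp (- s * L) = inverse (exp (s * L))" by (simp add: exp_minus)
    show ?thesis unfolding L_def[symmetric] e e2 by (simp add: field_simps)
  qed
  finally show ?thesis by (simp add: kf_def)
qed

lemma final_value: "1 - s / \<alpha> = exp (- (s * (s - 1)) * (P1 / (1 - s)))"
proof -
  have w0: "w \<noteq> 0" using w_pos by auto
  have "- (s * (s - 1)) * (P1 / (1 - s)) = Ln w - Ln (- \<alpha>)"
    using s0 s_1' by (simp add: P1_def field_simps)
  also have "exp \<dots> = w / (- \<alpha>)" using w0 a0 by (simp add: exp_diff)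
  also have "\<dots> = 1 - s / \<alpha>" using a0 by (simp add: w_def field_simps)
  finally show ?thesis by simp
qed

end

theorem mainTheorem10:
  fixes \<alpha> s :: complex
  assumes "\<alpha> \<notin> complex_of_real ` {0..}"
    and "Re \<alpha> > 0"
    and "Re s > 1"
    and "Re s > Re \<alpha>"
  shows "set_integrable lborel {1<..} (\<lambda>x. Phi \<alpha> x / complex_of_real x powr (s + 1))
    \<and> 1 - s / \<alpha> = exp (- (s * (s - 1)) *
        (LBINT x:{1<..}. Phi \<alpha> x / complex_of_real x powr (s + 1)))"
proof -
  interpret mt \<alpha> s using assms by unfold_locales
  have eq: "\<And>x. x \<in> {1<..} \<Longrightarrow> Phi \<alpha> x / complex_of_real x powr (s + 1) = kf x"
    using integrand_eq by auto
  have int: "set_integrable lborel {1<..} (\<lambda>x. Phi \<alpha> x / complex_of_real x powr (s + 1))"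
  proof -
    have "set_integrable lborel {1<..} (\<lambda>x. Phi \<alpha> x / complex_of_real x powr (s + 1)) = set_integrable lborel {1<..} kf"
      by (rule set_integrable_cong) (auto simp: eq)
    then show ?thesis using kf_integrable by simp
  qed
  have "(LBINT x:{1<..}. Phi \<alpha> x / complex_of_real x powr (s + 1)) = (LBINT x:{1<..}. kf x)"
    by (rule set_lebesgue_integral_cong) (auto simp: eq)
  with kf_integral final_value int show ?thesis by simp
qed

end
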